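(* There exists a point $x\in\{0,1,2\}^{\mathbb{N}}$ such that, for the full shift $(\{0,1,2\}^{\mathbb{N}},S)$, $V(x)\cap V^{\log}(x)=\emptyset$.
   Context: $S$ is the left shift. For $N\ge1$ let $\mathrm{Emp}(x,N)=\frac1N\sum_{n=1}^N\delta_{S^{n-1}(x)}$, and for $N\ge2$ let $\mathrm{Emp}^{\log}(x,N)=\frac1{\log N}\sum_{n=1}^N\frac1n\delta_{S^{n-1}(x)}$. $V(x)$ (resp. $V^{\log}(x)$) is the set of Borel probability measures $\nu$ such that $\mathrm{Emp}(x,N_k)\to\nu$ (resp. $\mathrm{Emp}^{\log}(x,N_k)\to\nu$) weak-$*$ for some increasing sequence $(N_k)$. *)

theory Defs
  imports "HOL-Probability.Probability"
begin

text \<open>The full shift on three symbols: sequences nat \<Rightarrow> nat with values in {0,1,2},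
  carrying the product topology (nat is discrete).\<close>

definition shift_space :: "(nat \<Rightarrow> nat) set" where
  "shift_space = {x. \<forall>n. x n \<in> {0,1,2}}"

definition lshift :: "(nat \<Rightarrow> nat) \<Rightarrow> (nat \<Rightarrow> nat)" where
  "lshift x = (\<lambda>n. x (Suc n))"

definition borel_prob_measures :: "(nat \<Rightarrow> nat) measure set" where
  "borel_prob_measures =
     {\<nu>. prob_space \<nu> \<and> sets \<nu> = sets (restrict_space borel shift_space)}"

definition emp_int :: "(nat \<Rightarrow> nat) \<Rightarrow> nat \<Rightarrow> ((nat \<Rightarrow> nat) \<Rightarrow> real) \<Rightarrow> real" where
  "emp_int x N f = (1 / real N) * (\<Sum>n=1..N. f ((lshift ^^ (n - 1)) x))"

definition emp_log_int :: "(nat \<Rightarrow> nat) \<Rightarrow> nat \<Rightarrow> ((nat \<Rightarrow> nat) \<Rightarrow> real) \<Rightarrow> real" where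
  "emp_log_int x N f = (1 / ln (real N)) * (\<Sum>n=1..N. (1 / real n) * f ((lshift ^^ (n - 1)) x))"

definition V :: "(nat \<Rightarrow> nat) \<Rightarrow> (nat \<Rightarrow> nat) measure set" where
  "V x = {\<nu> \<in> borel_prob_measures. \<exists>Nk :: nat \<Rightarrow> nat. strict_mono Nk \<and> (\<forall>k. Nk k \<ge> 1) \<and>
      (\<forall>f. continuous_on shift_space f \<longrightarrow>
         (\<lambda>k. emp_int x (Nk k) f) \<longlonglongrightarrow> (\<integral>y. f y \<partial>\<nu>))}"

definition V_log :: "(nat \<Rightarrow> nat) \<Rightarrow> (nat \<Rightarrow> nat) measure set" where
  "V_log x = {\<nu> \<in> borel_prob_measures. \<exists>Nk :: nat \<Rightarrow> nat. strict_mono Nk \<and> (\<forall>k. Nk k \<ge> 2) \<and>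
      (\<forall>f. continuous_on shift_space f \<longrightarrow>
         (\<lambda>k. emp_log_int x (Nk k) f) \<longlonglongrightarrow> (\<integral>y. f y \<partial>\<nu>))}"

end

theory Submission
  imports Defs
begin

function blk :: "nat \<Rightarrow> nat" where
  "blk n = (if n < 4 then 0 else Suc (blk (n div 4)))"
  by auto
termination by (relation "Wellfounded.measure id") auto

declare blk.simps[simp del]

lemma blk_eq: "4^k \<le> n \<Longrightarrow> n < 4^(Suc k) \<Longrightarrow> blk n = k"
proof (induction k arbitrary: n)
  case 0
  then show ?case by (simp add: blk.simps)
next
  case (Suc k)
  have "(4::nat) \<le> 4^(Suc k)" using one_le_power[of "4::nat" k] by simp
  then have "n \<ge> 4" using Suc.prems(1) by linarith
  have "4^k \<le> n div 4" using Suc.prems(1) by (simp add: less_eq_div_iff_mult_less_eq mult.commute)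
  moreover have "n div 4 < 4^(Suc k)" using Suc.prems(2) by (simp add: div_less_iff_less_mult mult.commute)
  ultimately have "blk (n div 4) = k" using Suc.IH by blast
  then show ?case using \<open>n \<ge> 4\<close> by (simp add: blk.simps)
qed

lemma blk_bounds: "n \<ge> 1 \<Longrightarrow> 4^(blk n) \<le> n \<and> n < 4^(Suc (blk n))"
proof (induction n rule: blk.induct)
  case (1 n)
  show ?case
  proof (cases "n < 4")
    case True then show ?thesis using 1 by (simp add: blk.simps)
  next
    case False
    then have "n div 4 \<ge> 1" by simp
    then have IH: "4^(blk (n div 4)) \<le> n div 4 \<and> n div 4 < 4^(Suc (blk (n div 4)))" using 1 False by blast
    have e: "blk n = Suc (blk (n div 4))" using False by (simp add: blk.simps)
    have "4^(Suc (blk (n div 4))) \<le> n" using IH by (simp add: less_eq_div_iff_mult_less_eq mult.commute)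
    moreover have "n < 4^(Suc (Suc (blk (n div 4))))" using IH by (simp add: div_less_iff_less_mult mult.commute)
    ultimately show ?thesis using e by simp
  qed
qed

lemma sum4: "(a::nat) \<le> b \<Longrightarrow> (\<Sum>n\<in>{4*a..<4*b}. F n) = (\<Sum>m\<in>{a..<b}. F (4*m) + F (4*m+1) + F (4*m+2) + F (4*m+3))"
proof (induction b rule: dec_induct)
  case base then show ?case by simp
next
  case (step b)
  have "(\<Sum>n\<in>{4*a..<4*Suc b}. F n) = (\<Sum>n\<in>{4*a..<4*b}. F n) + (\<Sum>n\<in>{4*b..<4*Suc b}. F n)"
    using step by (intro sum.atLeastLessThan_concat[symmetric]) auto
  moreover have "(\<Sum>n\<in>{4*b..<4*Suc b}. F n) = F (4*b) + F (4*b+1) + F (4*b+2) + F (4*b+3)"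
  proof -
    have "{4*b..<4*Suc b} = {4*b, 4*b+1, 4*b+2, 4*b+3}" by auto
    then show ?thesis by (simp add: add.assoc)
  qed
  ultimately show ?case using step by simp
qed

definition h :: "nat \<Rightarrow> real" where "h k = (\<Sum>n\<in>{4^k..<4^(Suc k)}. 1 / real n)"

lemma h_nonneg: "h k \<ge> 0" unfolding h_def by (intro sum_nonneg) auto

lemma h_Suc: "h (Suc k) \<le> h k"
proof -
  have "h (Suc k) = (\<Sum>n\<in>{4*4^k..<4*4^(Suc k)}. 1 / real n)" unfolding h_def by simp
  also have "\<dots> = (\<Sum>m\<in>{4^k..<4^(Suc k)}. 1/real (4*m) + 1/real (4*m+1) + 1/real (4*m+2) + 1/real (4*m+3))"
    by (rule sum4) simp
  also have "\<dots> \<le> (\<Sum>m\<in>{4^k..<4^(Suc k)}. 1/real m)"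
  proof (rule sum_mono)
    fix m assume "m \<in> {4^k..<4^(Suc k)::nat}"
    then have m: "m \<ge> 1" using one_le_power[of 4 k] by auto
    have a: "1/real (4*m+i) \<le> 1/(4 * real m)" for i
      using m by (intro divide_left_mono) auto
    show "1/real (4*m) + 1/real (4*m+1) + 1/real (4*m+2) + 1/real (4*m+3) \<le> 1/real m"
      using a[of 0] a[of 1] a[of 2] a[of 3] by simp
  qed
  finally show ?thesis unfolding h_def by simp
qed

lemma h_le0: "h k \<le> h 0"
  using decseq_SucI[of h, OF h_Suc] by (simp add: decseq_def)


definition T :: "nat \<Rightarrow> nat \<Rightarrow> real" where
  "T j K = (\<Sum>k<K. if k mod 3 = j then h k else 0)"

lemma T_Suc: "T j (Suc K) = T j K + (if K mod 3 = j then h K else 0)"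
  unfolding T_def by simp

lemma T_inv: "(K mod 3 = 0 \<longrightarrow> T 2 K \<le> T 1 K \<and> T 1 K \<le> T 0 K \<and> T 0 K + h K \<le> T 2 K + h 0) \<and>
  (K mod 3 = 1 \<longrightarrow> T 2 K \<le> T 1 K \<and> T 1 K + h K \<le> T 0 K \<and> T 0 K \<le> T 2 K + h 0) \<and>
  (K mod 3 = 2 \<longrightarrow> T 2 K + h K \<le> T 1 K \<and> T 1 K \<le> T 0 K \<and> T 0 K \<le> T 2 K + h 0)"
proof (induction K)
  case 0
  then show ?case by (simp add: T_def)
next
  case (Suc K)
  have hs: "h (Suc K) \<le> h K" by (rule h_Suc)
  consider "K mod 3 = 0" | "K mod 3 = 1" | "K mod 3 = 2" by arith
  then show ?case
  proof cases
    case 1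
    then have s: "Suc K mod 3 = 1" by arith
    have e: "T 0 (Suc K) = T 0 K + h K" "T 1 (Suc K) = T 1 K" "T 2 (Suc K) = T 2 K"
      using 1 by (simp_all add: T_Suc)
    have I: "T 2 K \<le> T 1 K" "T 1 K \<le> T 0 K" "T 0 K + h K \<le> T 2 K + h 0" using Suc.IH 1 by simp_all
    have a: "T 2 (Suc K) \<le> T 1 (Suc K)" "T 1 (Suc K) + h (Suc K) \<le> T 0 (Suc K)" "T 0 (Suc K) \<le> T 2 (Suc K) + h 0"
      using e I hs by linarith+
    show ?thesis using s a by simp
  next
    case 2
    then have s: "Suc K mod 3 = 2" by arith
    have e: "T 0 (Suc K) = T 0 K" "T 1 (Suc K) = T 1 K + h K" "T 2 (Suc K) = T 2 K"
      using 2 by (simp_all add: T_Suc)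
    have I: "T 2 K \<le> T 1 K" "T 1 K + h K \<le> T 0 K" "T 0 K \<le> T 2 K + h 0" using Suc.IH 2 by simp_all
    have a: "T 2 (Suc K) + h (Suc K) \<le> T 1 (Suc K)" "T 1 (Suc K) \<le> T 0 (Suc K)" "T 0 (Suc K) \<le> T 2 (Suc K) + h 0"
      using e I hs by linarith+
    show ?thesis using s a by simp
  next
    case 3
    then have s: "Suc K mod 3 = 0" by arith
    have e: "T 0 (Suc K) = T 0 K" "T 1 (Suc K) = T 1 K" "T 2 (Suc K) = T 2 K + h K"
      using 3 by (simp_all add: T_Suc)
    have I: "T 2 K + h K \<le> T 1 K" "T 1 K \<le> T 0 K" "T 0 K \<le> T 2 K + h 0" using Suc.IH 3 by simp_all
    have a: "T 2 (Suc K) \<le> T 1 (Suc K)" "T 1 (Suc K) \<le> T 0 (Suc K)" "T 0 (Suc K) + h (Suc K) \<le> T 2 (Suc K) + h 0"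
      using e I hs by linarith+
    show ?thesis using s a by simp
  qed
qed

lemma T_close: "j < 3 \<Longrightarrow> j' < 3 \<Longrightarrow> T j K \<le> T j' K + h 0"
proof -
  assume j: "j < 3" "j' < 3"
  have "T 2 K \<le> T 1 K \<and> T 1 K \<le> T 0 K \<and> T 0 K \<le> T 2 K + h 0"
    using T_inv[of K] h_nonneg[of K] by arith
  moreover have "j = 0 \<or> j = 1 \<or> j = 2" "j' = 0 \<or> j' = 1 \<or> j' = 2" using j by auto
  ultimately show ?thesis using h_nonneg[of 0] by auto
qed

definition c :: "nat \<Rightarrow> nat \<Rightarrow> real" where
  "c j n = (if blk n mod 3 = j then 1 else 0)"

definition U :: "nat \<Rightarrow> nat \<Rightarrow> real" where
  "U j N = (\<Sum>n=1..N. (1 / real n) * c j n)"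

lemma pow4_ge1: "(1::nat) \<le> 4^k" using one_le_power[of "4::nat" k] by simp

lemma block_sum: "(\<Sum>n\<in>{4^K..<4^(Suc K)}. (1 / real n) * c j n) = (if K mod 3 = j then h K else 0)"
proof -
  have "(\<Sum>n\<in>{4^K..<4^(Suc K)}. (1 / real n) * c j n) = (\<Sum>n\<in>{4^K..<4^(Suc K)}. (1 / real n) * (if K mod 3 = j then 1 else 0))"
  proof (intro sum.cong refl)
    fix n assume "n \<in> {4^K..<4^(Suc K)::nat}"
    then have "blk n = K" by (intro blk_eq) auto
    then show "(1 / real n) * c j n = (1 / real n) * (if K mod 3 = j then 1 else 0)" by (simp add: c_def)
  qed
  then show ?thesis unfolding h_def by (simp add: sum_distrib_right)
qed

lemma T_sum: "(\<Sum>n\<in>{1..<4^K}. (1 / real n) * c j n) = T j K"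
proof (induction K)
  case 0 then show ?case by (simp add: T_def)
next
  case (Suc K)
  have "(4::nat)^K \<le> 4^(Suc K)" by simp
  then have "(\<Sum>n\<in>{1..<4^(Suc K)}. (1 / real n) * c j n) = (\<Sum>n\<in>{1..<4^K}. (1 / real n) * c j n) + (\<Sum>n\<in>{4^K..<4^(Suc K)}. (1 / real n) * c j n)"
    using pow4_ge1[of K] by (intro sum.atLeastLessThan_concat[symmetric]) auto
  then show ?case unfolding Suc.IH block_sum T_Suc by simp
qed

lemma U_decomp: assumes "N \<ge> 1"
  shows "\<exists>P. U j N = T j (blk N) + P \<and> 0 \<le> P \<and> P \<le> h 0"
proof -
  define K where "K = blk N"
  have b: "4^K \<le> N" "N < 4^(Suc K)" using blk_bounds[OF assms] K_def by auto
  define P where "P = (\<Sum>n\<in>{4^K..<Suc N}. (1 / real n) * c j n)"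
  have "U j N = (\<Sum>n\<in>{1..<Suc N}. (1 / real n) * c j n)" unfolding U_def
    by (intro sum.cong) auto
  also have "\<dots> = (\<Sum>n\<in>{1..<4^K}. (1 / real n) * c j n) + P"
    unfolding P_def using b pow4_ge1[of K] by (intro sum.atLeastLessThan_concat[symmetric]) auto
  also have "\<dots> = T j K + P" by (simp only: T_sum)
  finally have 1: "U j N = T j K + P" .
  have 2: "0 \<le> P" unfolding P_def by (intro sum_nonneg) (auto simp: c_def)
  have "P \<le> (\<Sum>n\<in>{4^K..<4^(Suc K)}. (1 / real n) * c j n)"
    unfolding P_def using b by (intro sum_mono2) (auto simp: c_def)
  also have "\<dots> \<le> h K" unfolding block_sum using h_nonneg[of K] by simp
  also have "\<dots> \<le> h 0" by (rule h_le0)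
  finally show ?thesis using 1 2 K_def by blast
qed

lemma U_close: "N \<ge> 1 \<Longrightarrow> j < 3 \<Longrightarrow> j' < 3 \<Longrightarrow> U j N \<le> U j' N + 2 * h 0"
  using U_decomp[of N j] U_decomp[of N j'] T_close[of j j' "blk N"] by fastforce

lemma U_total: "U 0 N + U 1 N + U 2 N = harm N"
proof -
  have "U 0 N + U 1 N + U 2 N = (\<Sum>n=1..N. (1 / real n) * (c 0 n + c 1 n + c 2 n))"
    unfolding U_def by (simp add: sum.distrib distrib_left)
  also have "\<dots> = (\<Sum>n=1..N. inverse (real n))"
  proof (intro sum.cong refl)
    fix n
    have "blk n mod 3 = 0 \<or> blk n mod 3 = 1 \<or> blk n mod 3 = 2" by arith
    then show "(1 / real n) * (c 0 n + c 1 n + c 2 n) = inverse (real n)"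
      by (auto simp: c_def divide_inverse)
  qed
  finally show ?thesis by (simp add: harm_def)
qed

lemma U_third: assumes "N \<ge> 1" "j < 3" shows "\<bar>U j N - harm N / 3\<bar> \<le> 2 * h 0"
proof -
  have "U j N \<le> U 0 N + 2*h 0" "U j N \<le> U 1 N + 2*h 0" "U j N \<le> U 2 N + 2*h 0"
       "U 0 N \<le> U j N + 2*h 0" "U 1 N \<le> U j N + 2*h 0" "U 2 N \<le> U j N + 2*h 0"
    using U_close assms by auto
  then show ?thesis using U_total[of N] by (auto simp: abs_le_iff)
qed


lemma U_lim: assumes "j < 3" shows "(\<lambda>N. (1 / ln (real N)) * U j N) \<longlonglongrightarrow> 1/3"
proof -
  have L: "filterlim (\<lambda>N. ln (real N)) at_infinity sequentially"
    by (intro filterlim_at_top_imp_at_infinity filterlim_compose[OF ln_at_top filterlim_real_sequentially])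
  have A: "(\<lambda>N. (harm N - ln (real N)) / ln (real N) :: real) \<longlonglongrightarrow> 0"
    by (rule tendsto_divide_0[OF euler_mascheroni_LIMSEQ L])
  have B: "(\<lambda>N. (U j N - harm N / 3) / ln (real N)) \<longlonglongrightarrow> 0"
  proof (rule Lim_null_comparison[where g="\<lambda>N. 2*h 0 / ln (real N)"])
    show "\<forall>\<^sub>F N in sequentially. norm ((U j N - harm N / 3) / ln (real N)) \<le> 2 * h 0 / ln (real N)"
      unfolding eventually_sequentially
    proof (intro exI[of _ 2] allI impI)
      fix N :: nat assume N: "N \<ge> 2"
      then have lp: "ln (real N) > 0" by simp
      have "\<bar>U j N - harm N / 3\<bar> \<le> 2 * h 0" using U_third[of N j] N assms by simp
      then show "norm ((U j N - harm N / 3) / ln (real N)) \<le> 2 * h 0 / ln (real N)"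
        using lp by (simp add: abs_divide divide_right_mono)
    qed
    show "(\<lambda>N. 2*h 0 / ln (real N)) \<longlonglongrightarrow> 0"
      by (rule tendsto_divide_0[OF tendsto_const L])
  qed
  have C: "(\<lambda>N. (1 + (harm N - ln (real N)) / ln (real N)) / 3 + (U j N - harm N / 3) / ln (real N)) \<longlonglongrightarrow> (1 + 0) / 3 + 0"
    by (intro tendsto_intros A B) simp
  then have C': "(\<lambda>N. (1 + (harm N - ln (real N)) / ln (real N)) / 3 + (U j N - harm N / 3) / ln (real N)) \<longlonglongrightarrow> 1/3"
    by simp
  show ?thesis
  proof (rule Lim_transform_eventually[OF C'])
    show "\<forall>\<^sub>F N in sequentially. (1 + (harm N - ln (real N)) / ln (real N)) / 3 + (U j N - harm N / 3) / ln (real N) = (1 / ln (real N)) * U j N"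
      unfolding eventually_sequentially
    proof (intro exI[of _ 2] allI impI)
      fix N :: nat assume N: "N \<ge> 2"
      then have lp: "ln (real N) > 0" by simp
      then show "(1 + (harm N - ln (real N)) / ln (real N)) / 3 + (U j N - harm N / 3) / ln (real N) = (1 / ln (real N)) * U j N"
        by (simp add: field_simps)
    qed
  qed
qed

lemma sum_ones: "(\<And>n. n \<in> I \<Longrightarrow> c j n = 1) \<Longrightarrow> (\<Sum>n\<in>I. c j n) = real (card I)"
  by simp

lemma cesaro: assumes "N \<ge> 1" shows "\<exists>j<3. (\<Sum>n=1..N. c j n) \<ge> 3/8 * real N"
proof -
  define K where "K = blk N"
  have b: "4^K \<le> N" "N < 4^(Suc K)" using blk_bounds[OF assms] K_def by auto
  have nn: "\<And>j n. c j n \<ge> 0" by (simp add: c_def)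
  show ?thesis
  proof (cases "2 * 4^K \<le> N + 1")
    case True
    define P where "P = (4::nat)^K"
    define I where "I = {P..N}"
    have P1: "1 \<le> P" using pow4_ge1[of K] P_def by simp
    have sub: "I \<subseteq> {1..N}" using P1 I_def by auto
    have one: "c (K mod 3) n = 1" if "n \<in> I" for n
    proof -
      have "blk n = K" using that b I_def P_def by (intro blk_eq) auto
      then show ?thesis by (simp add: c_def)
    qed
    have "(\<Sum>n=1..N. c (K mod 3) n) \<ge> (\<Sum>n\<in>I. c (K mod 3) n)"
      using sub nn by (intro sum_mono2) auto
    also have "(\<Sum>n\<in>I. c (K mod 3) n) = real (card I)" using one by simp
    also have "card I = N + 1 - P" using I_def by simp
    finally have s: "(\<Sum>n=1..N. c (K mod 3) n) \<ge> real (N + 1 - P)" .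
    have PN: "2 * P \<le> N + 1" using True P_def by simp
    then have "real (N + 1 - P) = real N + 1 - real P" by (simp add: of_nat_diff)
    moreover have "2 * real P \<le> real N + 1" using PN by linarith
    ultimately have "real (N + 1 - P) \<ge> 3/8 * real N" by linarith
    then show ?thesis using s by (intro exI[of _ "K mod 3"]) auto
  next
    case False
    then have "K \<noteq> 0" using assms by (cases K) auto
    then obtain K' where K': "K = Suc K'" by (cases K) auto
    define Q where "Q = (4::nat)^K'"
    have Q4: "(4::nat)^K = 4 * Q" using K' Q_def by simp
    define I where "I = {Q..<4*Q}"
    have Q1: "1 \<le> Q" using pow4_ge1[of K'] Q_def by simp
    have sub: "I \<subseteq> {1..N}" using Q1 I_def b Q4 by auto
    have one: "c (K' mod 3) n = 1" if "n \<in> I" for n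
    proof -
      have "blk n = K'" using that I_def Q_def by (intro blk_eq) auto
      then show ?thesis by (simp add: c_def)
    qed
    have "(\<Sum>n=1..N. c (K' mod 3) n) \<ge> (\<Sum>n\<in>I. c (K' mod 3) n)"
      using sub nn by (intro sum_mono2) auto
    also have "(\<Sum>n\<in>I. c (K' mod 3) n) = real (card I)" using one by simp
    also have "card I = 3 * Q" using I_def by simp
    finally have s: "(\<Sum>n=1..N. c (K' mod 3) n) \<ge> real (3 * Q)" .
    have "N + 1 < 8 * Q" using False Q4 by simp
    then have "real N + 1 < 8 * real Q" by linarith
    then have "3/8 * real N \<le> real (3 * Q)" by simp
    then show ?thesis using s by (intro exI[of _ "K' mod 3"]) auto
  qed
qed

lemma iter_lshift: "(lshift ^^ m) x = (\<lambda>i. x (i + m))"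
  by (induction m) (auto simp: lshift_def)

definition xp :: "nat \<Rightarrow> nat" where "xp = (\<lambda>i. blk (Suc i) mod 3)"

definition fj :: "nat \<Rightarrow> (nat \<Rightarrow> nat) \<Rightarrow> real" where
  "fj j = (\<lambda>y. if y 0 = j then 1 else 0)"

lemma fj_cont: "continuous_on shift_space (fj j)"
proof -
  have "continuous_on UNIV (\<lambda>y::nat\<Rightarrow>nat. (\<lambda>m::nat. if m = j then 1 else (0::real)) (y 0))"
    by (rule continuous_on_compose2[OF Topological_Spaces.continuous_on_discrete continuous_on_product_coordinates]) auto
  then show ?thesis unfolding fj_def by (rule continuous_on_subset) auto
qed

lemma fj_orbit: "n \<ge> 1 \<Longrightarrow> fj j ((lshift ^^ (n - 1)) xp) = c j n"
  by (simp add: iter_lshift fj_def xp_def c_def)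

lemma emp_eq: "emp_int xp N (fj j) = (1 / real N) * (\<Sum>n=1..N. c j n)"
  unfolding emp_int_def by (intro arg_cong2[where f="(*)"] refl sum.cong) (auto simp: iter_lshift fj_def xp_def c_def)

lemma emp_log_eq: "emp_log_int xp N (fj j) = (1 / ln (real N)) * U j N"
  unfolding emp_log_int_def U_def by (intro arg_cong2[where f="(*)"] refl sum.cong) (auto simp: iter_lshift fj_def xp_def c_def)

theorem proposition4p5:
  shows "\<exists>x \<in> shift_space. V x \<inter> V_log x = {}"
proof (intro bexI[of _ xp])
  show "xp \<in> shift_space" unfolding shift_space_def xp_def by auto
  show "V xp \<inter> V_log xp = {}"
  proof (rule ccontr)
    assume "V xp \<inter> V_log xp \<noteq> {}"
    then obtain \<nu> where nV: "\<nu> \<in> V xp" and nL: "\<nu> \<in> V_log xp" by blast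
    from nL obtain Mk where Mk: "strict_mono Mk" and
      Mlim: "\<And>f. continuous_on shift_space f \<Longrightarrow> (\<lambda>k. emp_log_int xp (Mk k) f) \<longlonglongrightarrow> (\<integral>y. f y \<partial>\<nu>)"
      unfolding V_log_def by blast
    from nV obtain Nk where Nk: "\<And>k. Nk k \<ge> 1" and
      Nlim: "\<And>f. continuous_on shift_space f \<Longrightarrow> (\<lambda>k. emp_int xp (Nk k) f) \<longlonglongrightarrow> (\<integral>y. f y \<partial>\<nu>)"
      unfolding V_def by blast
    have int: "(\<integral>y. fj j y \<partial>\<nu>) = 1/3" if j: "j < 3" for j
    proof -
      have "(\<lambda>k. emp_log_int xp (Mk k) (fj j)) \<longlonglongrightarrow> 1/3"
        unfolding emp_log_eq
        using filterlim_compose[OF U_lim[OF j] filterlim_subseq[OF Mk]] by (simp add: o_def)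
      then show ?thesis using Mlim[OF fj_cont] LIMSEQ_unique by blast
    qed
    have ev: "\<forall>\<^sub>F k in sequentially. emp_int xp (Nk k) (fj j) < 3/8" if j: "j < 3" for j
    proof -
      have "(\<lambda>k. emp_int xp (Nk k) (fj j)) \<longlonglongrightarrow> (\<integral>y. fj j y \<partial>\<nu>)" by (rule Nlim[OF fj_cont])
      then have "(\<lambda>k. emp_int xp (Nk k) (fj j)) \<longlonglongrightarrow> 1/3" unfolding int[OF j] .
      then show ?thesis by (rule order_tendstoD(2)) simp
    qed
    have "\<forall>\<^sub>F k in sequentially. emp_int xp (Nk k) (fj 0) < 3/8 \<and> emp_int xp (Nk k) (fj 1) < 3/8 \<and> emp_int xp (Nk k) (fj 2) < 3/8"
      using ev[of 0] ev[of 1] ev[of 2] by (simp add: eventually_conj_iff)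
    then obtain k where k: "emp_int xp (Nk k) (fj 0) < 3/8" "emp_int xp (Nk k) (fj 1) < 3/8" "emp_int xp (Nk k) (fj 2) < 3/8"
      unfolding eventually_sequentially by blast
    obtain j where j: "j < 3" and s: "(\<Sum>n=1..Nk k. c j n) \<ge> 3/8 * real (Nk k)"
      using cesaro[OF Nk[of k]] by blast
    have pos: "real (Nk k) > 0" using Nk[of k] by simp
    have "emp_int xp (Nk k) (fj j) \<ge> 3/8"
      unfolding emp_eq using s pos by (simp add: field_simps)
    moreover have "j = 0 \<or> j = 1 \<or> j = 2" using j by auto
    ultimately show False using k by auto
  qed
qed

end
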